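(* Let $a:[0,\infty)\to[0,\infty)$ be non-negative and non-decreasing, let $f(x)=\exp\bigl(-\int_0^x a(y)\,dy\bigr)$ for $x\ge 0$ (so that $a=-f'/f$), let $\mathcal L(\gamma)=\int_0^\infty e^{-\gamma x}f(x)\,dx$ and $\gamma_{\min}=\inf\{\gamma\in\mathbb R:\mathcal L(\gamma)<\infty\}$ (so $\gamma_{\min}=-\lim_{x\to\infty}a(x)\in[-\infty,0]$). Fix $s\ge 1$. The stationary distribution of the controlled $s$-server system described in the context exists (i) for the global control, i.e. admission probabilities $p_s(k)$ with $p_s(0)\cdots p_s(n)=f\bigl(\tfrac{n+1}{\sqrt s}\bigr)$ for all $n\in\mathbb N_0$, if and only if $0\le\rho<e^{-\gamma_{\min}/\sqrt s}$ (and $e^{-\gamma_{\min}/\sqrt s}=1-\gamma_{\min}/\sqrt s+O(1/s)$); (ii) for the local control, i.e. $p_s(k)=\bigl(1+\tfrac{1}{\sqrt s}a\bigl(\tfrac{k+1}{\sqrt s}\bigr)\bigr)^{-1}$ for $k\in\mathbb N_0$, if and only if $0\le\rho<1-\gamma_{\min}/\sqrt s$. (Here an upper bound equal to $+\infty$ means that the stationary distribution exists for all $\rho\ge0$.)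
   Context: The system: $s$ parallel servers, customers arrive according to a Poisson process of rate $\lambda=s\rho$, service times are i.i.d. exponential with mean $1$, all interarrival and service times independent. A customer who upon arrival finds all servers busy and $k$ other customers waiting is admitted with probability $p_s(k)$ and rejected otherwise; customers finding an idle server are always admitted. The number of customers in the system is then a birth–death process with birth rate $\lambda$ in states $0,\dots,s-1$, birth rate $\lambda p_s(k-s)$ in states $k\ge s$, and death rate $\min\{k,s\}$ in state $k$. Its stationary distribution, when it exists, is $\pi_k=\pi_0(s\rho)^k/k!$ for $0\le k\le s$ and $\pi_k=\pi_0\frac{s^s\rho^k}{s!}\prod_{i=0}^{k-s-1}p_s(i)$ for $k>s$, with $\pi_0^{-1}=\sum_{k=0}^s\frac{(s\rho)^k}{k!}+\frac{(s\rho)^s}{s!}F_s(\rho)$, where $F_s(\rho)=\sum_{n=0}^\infty p_s(0)\cdots p_s(n)\,\rho^{n+1}$; it exists if and only if $F_s(\rho)<\infty$. *)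

theory Defs
  imports "HOL-Analysis.Analysis" "HOL-Library.Landau_Symbols"
begin

definition ctrl_f :: "(real \<Rightarrow> real) \<Rightarrow> real \<Rightarrow> real" where
  "ctrl_f a x = exp (- integral {0..x} a)"

definition laplace_finite :: "(real \<Rightarrow> real) \<Rightarrow> real \<Rightarrow> bool" where
  "laplace_finite a \<gamma> \<longleftrightarrow>
     (\<integral>\<^sup>+ x \<in> {0..}. ennreal (exp (- \<gamma> * x) * ctrl_f a x) \<partial>lborel) < \<infinity>"

definition gamma_min :: "(real \<Rightarrow> real) \<Rightarrow> ereal" where
  "gamma_min a = Inf {ereal \<gamma> | \<gamma>. laplace_finite a \<gamma>}"

text \<open>Birth rates of the controlled s-server queue (lambda = s rho), death rates min k s.\<close>
definition queue_birth :: "nat \<Rightarrow> real \<Rightarrow> (nat \<Rightarrow> real) \<Rightarrow> nat \<Rightarrow> real" where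
  "queue_birth s \<rho> p k = (if k < s then real s * \<rho> else real s * \<rho> * p (k - s))"

definition queue_death :: "nat \<Rightarrow> nat \<Rightarrow> real" where
  "queue_death s k = real (min k s)"

text \<open>Stationary distribution of a birth-death process on nat with birth rates b and
  death rates d: a probability vector pi with pi Q = 0 (global balance equations).\<close>
definition bd_stationary :: "(nat \<Rightarrow> real) \<Rightarrow> (nat \<Rightarrow> real) \<Rightarrow> (nat \<Rightarrow> real) \<Rightarrow> bool" where
  "bd_stationary b d \<pi> \<longleftrightarrow>
     (\<forall>k. 0 \<le> \<pi> k) \<and> \<pi> sums 1 \<and>
     (\<forall>k. (if k = 0 then 0 else \<pi> (k - 1) * b (k - 1)) + \<pi> (k + 1) * d (k + 1)
           = \<pi> k * (b k + d k))"

definition stationary_exists :: "nat \<Rightarrow> real \<Rightarrow> (nat \<Rightarrow> real) \<Rightarrow> bool" where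
  "stationary_exists s \<rho> p \<longleftrightarrow> (\<exists>\<pi>. bd_stationary (queue_birth s \<rho> p) (queue_death s) \<pi>)"

end

theory Submission
  imports Defs
begin


locale aset =
  fixes a :: "real \<Rightarrow> real"
  assumes a_nonneg: "\<forall>x\<ge>0. 0 \<le> a x"
    and a_mono: "mono_on {0..} a"
begin

definition A where "A x = integral {0..x} a"
definition aI where "aI = (SUP x\<in>{0..}. ereal (a x))"

lemma int_a: "a integrable_on {u..v}" if "0 \<le> u" for u v
  by (rule integrable_on_mono_on, rule mono_on_subset[OF a_mono]) (use that in auto)

lemma A_nonneg: "0 \<le> x \<Longrightarrow> 0 \<le> A x"
  unfolding A_def using a_nonneg by (intro integral_nonneg int_a) auto

lemma A_lower: assumes "0 \<le> x0" "0 \<le> x" shows "a x0 * (x - x0) \<le> A x"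
proof (cases "x \<le> x0")
  case True
  then have "a x0 * (x - x0) \<le> 0" using a_nonneg assms by (simp add: mult_nonneg_nonpos)
  then show ?thesis using A_nonneg[OF assms(2)] by linarith
next
  case False
  have "integral {0..x0} a + integral {x0..x} a = integral {0..x} a"
    by (rule Henstock_Kurzweil_Integration.integral_combine) (use False assms in \<open>auto intro: int_a\<close>)
  then have "A x = integral {0..x0} a + integral {x0..x} a" by (simp add: A_def)
  moreover have "0 \<le> integral {0..x0} a" using A_nonneg[OF assms(1)] by (simp add: A_def)
  moreover have "integral {x0..x} (\<lambda>_. a x0) \<le> integral {x0..x} a"
    using assms a_mono by (intro integral_le int_a) (auto simp: mono_on_def)
  moreover have "integral {x0..x} (\<lambda>_. a x0) = a x0 * (x - x0)" using False by simp
  ultimately show ?thesis by linarith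
qed

lemma A_upper: assumes "\<forall>y\<ge>0. a y \<le> m" "0 \<le> x" shows "A x \<le> m * x"
proof -
  have "integral {0..x} a \<le> integral {0..x} (\<lambda>_. m)"
    using assms by (intro integral_le int_a) auto
  then show ?thesis using assms by (simp add: A_def mult.commute)
qed

lemma aI_ge: "0 \<le> x \<Longrightarrow> ereal (a x) \<le> aI"
  unfolding aI_def by (rule SUP_upper) auto

lemma aI_nonneg: "0 \<le> aI"
  using aI_ge[of 0] a_nonneg by (meson ereal_less_eq(5) order.trans order_refl)

lemma aI_less: "ereal u < aI \<Longrightarrow> \<exists>x0\<ge>0. u < a x0"
  unfolding aI_def less_SUP_iff by auto

lemma aI_le: "aI \<le> ereal u \<Longrightarrow> \<forall>x\<ge>0. a x \<le> u"
  unfolding aI_def SUP_le_iff by auto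

lemma f_eq: "ctrl_f a x = exp (- A x)"
  by (simp add: ctrl_f_def A_def)

lemma laplace_iff: "laplace_finite a \<gamma> \<longleftrightarrow> ereal (-\<gamma>) < aI"
proof
  assume "ereal (-\<gamma>) < aI"
  then obtain x0 where x0: "x0 \<ge> 0" "-\<gamma> < a x0" using aI_less by blast
  define c where "c = a x0"
  define \<delta> where "\<delta> = \<gamma> + c"
  have dpos: "\<delta> > 0" using x0 by (simp add: \<delta>_def c_def)
  have bnd: "exp (- \<gamma> * x) * ctrl_f a x \<le> exp (c * x0) * exp (- \<delta> * x)" if "x \<ge> 0" for x
  proof -
    have "c * (x - x0) \<le> A x" using A_lower[OF x0(1) that] by (simp add: c_def)
    then have "- \<gamma> * x - A x \<le> c * x0 + (- \<delta> * x)" by (simp add: \<delta>_def algebra_simps)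
    then have "exp (- \<gamma> * x + - A x) \<le> exp (c * x0 + (- \<delta> * x))" by simp
    then show ?thesis by (simp only: f_eq mult_exp_exp)
  qed
  have "(\<integral>\<^sup>+ x \<in> {0..}. ennreal (exp (- \<gamma> * x) * ctrl_f a x) \<partial>lborel)
      \<le> (\<integral>\<^sup>+ x. ennreal (indicator {0..} x * (exp (c * x0) * exp (- \<delta> * x))) \<partial>lborel)"
    proof (intro nn_integral_mono)
    fix x :: real
    show "ennreal (exp (- \<gamma> * x) * ctrl_f a x) * indicator {0..} x
       \<le> ennreal (indicator {0..} x * (exp (c * x0) * exp (- \<delta> * x)))"
      using bnd[of x] by (cases "x \<ge> 0") (auto simp: indicator_def intro!: ennreal_leI)
  qed
  also have "\<dots> = ennreal (exp (c * x0) * (exp (- \<delta> * 0) / \<delta>))"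
  proof (rule nn_integral_has_integral_lebesgue)
    show "((\<lambda>x. exp (c * x0) * exp (- \<delta> * x)) has_integral exp (c * x0) * (exp (- \<delta> * 0) / \<delta>)) {0..}"
      by (rule has_integral_mult_right, rule has_integral_exp_minus_to_infinity[OF dpos])
  qed simp
  finally have le: "(\<integral>\<^sup>+ x \<in> {0..}. ennreal (exp (- \<gamma> * x) * ctrl_f a x) \<partial>lborel)
      \<le> ennreal (exp (c * x0) * (exp (- \<delta> * 0) / \<delta>))" .
  show "laplace_finite a \<gamma>" unfolding laplace_finite_def
    using le_less_trans[OF le ennreal_less_top] by simp
next
  assume "laplace_finite a \<gamma>"
  show "ereal (-\<gamma>) < aI"
  proof (rule ccontr)
    assume "\<not> ereal (-\<gamma>) < aI"
    then have le: "\<forall>x\<ge>0. a x \<le> -\<gamma>" using aI_le by (simp add: not_less)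
    define I where "I = (\<integral>\<^sup>+ x \<in> {0..}. ennreal (exp (- \<gamma> * x) * ctrl_f a x) \<partial>lborel)"
    have nI: "ennreal (real n) \<le> I" for n :: nat
    proof -
      have "ennreal (real n) = (\<integral>\<^sup>+ x. indicator {0..real n} x \<partial>lborel)"
        by simp
      also have "\<dots> \<le> I" unfolding I_def
      proof (intro nn_integral_mono)
        fix x :: real
        show "indicator {0..real n} x \<le> ennreal (exp (- \<gamma> * x) * ctrl_f a x) * indicator {0..} x"
        proof (cases "x \<ge> 0")
          case True
          have "A x \<le> -\<gamma> * x" using A_upper[OF le True] .
          then have "1 \<le> exp (- \<gamma> * x + - A x)" by simp
          then have "1 \<le> exp (- \<gamma> * x) * ctrl_f a x" by (simp only: f_eq mult_exp_exp)
          then show ?thesis using True by (simp add: indicator_def)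
        qed (simp add: indicator_def)
      qed
      finally show ?thesis .
    qed
    have "I < top" using \<open>laplace_finite a \<gamma>\<close> unfolding laplace_finite_def I_def by simp
    then obtain r where r: "0 \<le> r" "I = ennreal r" unfolding less_top_ennreal by blast
    obtain n :: nat where "r < real n" using reals_Archimedean2 by blast
    moreover have "real n \<le> r" using nI[of n] r by simp
    ultimately show False by simp
  qed
qed

lemma gamma_min_eq: "gamma_min a = - aI"
proof -
  have iff: "laplace_finite a \<gamma> \<longleftrightarrow> - aI < ereal \<gamma>" for \<gamma>
    unfolding laplace_iff by (metis ereal_uminus_less_reorder uminus_ereal.simps(1))
  have S: "{ereal \<gamma> | \<gamma>. laplace_finite a \<gamma>} = {ereal \<gamma> | \<gamma>. - aI < ereal \<gamma>}"
    unfolding iff ..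
  show ?thesis unfolding gamma_min_def S
  proof (rule antisym)
    show "Inf {ereal \<gamma> |\<gamma>. - aI < ereal \<gamma>} \<le> - aI"
      unfolding Inf_le_iff
    proof (intro allI impI)
      fix y assume "- aI < y"
      then obtain z where "- aI < ereal z" "ereal z < y" using ereal_dense2 by blast
      then show "\<exists>b\<in>{ereal \<gamma> |\<gamma>. - aI < ereal \<gamma>}. b < y" by blast
    qed
    show "- aI \<le> Inf {ereal \<gamma> |\<gamma>. - aI < ereal \<gamma>}"
      by (rule Inf_greatest) auto
  qed
qed

end


lemma bd_iff:
  fixes b d :: "nat \<Rightarrow> real"
  assumes d0: "d 0 = 0" and dpos: "\<forall>k. d (Suc k) > 0"
  shows "(\<exists>\<pi>. bd_stationary b d \<pi>) \<longleftrightarrow>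
     (\<forall>k. 0 \<le> (\<Prod>i<k. b i / d (Suc i))) \<and> summable (\<lambda>k. \<Prod>i<k. b i / d (Suc i))"
    (is "_ \<longleftrightarrow> (\<forall>k. 0 \<le> ?w k) \<and> summable ?w")
proof
  assume "\<exists>\<pi>. bd_stationary b d \<pi>"
  then obtain \<pi> where nn: "\<forall>k. 0 \<le> \<pi> k" and s1: "\<pi> sums 1"
    and bal: "\<And>k. (if k = 0 then 0 else \<pi> (k - 1) * b (k - 1)) + \<pi> (k + 1) * d (k + 1)
           = \<pi> k * (b k + d k)"
    unfolding bd_stationary_def by blast
  have det: "\<pi> (Suc k) * d (Suc k) = \<pi> k * b k" for k
  proof (induction k)
    case 0
    show ?case using bal[of 0] d0 by simp
  next
    case (Suc k)
    have "\<pi> k * b k + \<pi> (Suc (Suc k)) * d (Suc (Suc k)) = \<pi> (Suc k) * (b (Suc k) + d (Suc k))"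
      using bal[of "Suc k"] by simp
    then show ?case using Suc by (simp add: distrib_left)
  qed
  have pw: "\<pi> k = \<pi> 0 * ?w k" for k
  proof (induction k)
    case (Suc k)
    have "\<pi> (Suc k) = \<pi> k * b k / d (Suc k)"
      using det[of k] dpos[rule_format, of k] by (simp add: eq_divide_eq)
    then show ?case using Suc by (simp add: lessThan_Suc)
  qed simp
  have p0: "\<pi> 0 > 0"
  proof (rule ccontr)
    assume "\<not> \<pi> 0 > 0"
    then have "\<pi> 0 = 0" using nn[rule_format, of 0] by linarith
    then have "\<pi> = (\<lambda>_. 0)" using pw by (metis mult_zero_left)
    then have "(\<lambda>_. 0::real) sums 1" using s1 by simp
    then show False using sums_unique2[OF _ sums_zero] by fastforce
  qed
  have weq: "?w = (\<lambda>k. \<pi> k / \<pi> 0)"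
  proof
    fix k show "?w k = \<pi> k / \<pi> 0" using pw[of k] p0 by (simp add: field_simps)
  qed
  have wk: "?w k = \<pi> k / \<pi> 0" for k using pw[of k] p0 by (simp add: field_simps)
  have "summable (\<lambda>k. \<pi> k / \<pi> 0)" using summable_divide[OF sums_summable[OF s1]] .
  then have "summable ?w" unfolding weq .
  moreover have "\<forall>k. 0 \<le> ?w k" unfolding wk using nn p0 by simp
  ultimately show "(\<forall>k. 0 \<le> ?w k) \<and> summable ?w" by blast
next
  assume "(\<forall>k. 0 \<le> ?w k) \<and> summable ?w"
  then have wnn: "\<And>k. 0 \<le> ?w k" and sw: "summable ?w" by auto
  define S where "S = suminf ?w"
  have "sum ?w {0} \<le> S" unfolding S_def by (rule sum_le_suminf[OF sw]) (auto simp: wnn)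
  then have Spos: "S > 0" by simp
  define \<pi> where "\<pi> k = ?w k / S" for k
  have det: "\<pi> (Suc k) * d (Suc k) = \<pi> k * b k" for k
    using dpos[rule_format, of k] by (simp add: \<pi>_def lessThan_Suc field_simps)
  have "bd_stationary b d \<pi>"
    unfolding bd_stationary_def
  proof (intro conjI allI)
    show "0 \<le> \<pi> k" for k using wnn Spos by (simp add: \<pi>_def)
    show "\<pi> sums 1" unfolding \<pi>_def
      using sums_divide[OF summable_sums[OF sw], of S] Spos by (simp add: S_def)
    fix k
    show "(if k = 0 then 0 else \<pi> (k - 1) * b (k - 1)) + \<pi> (k + 1) * d (k + 1) = \<pi> k * (b k + d k)"
    proof (cases k)
      case 0
      then show ?thesis using det[of 0] d0 by simp
    next
      case (Suc j)
      then show ?thesis using det[of j] det[of k] by (simp add: distrib_left)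
    qed
  qed
  then show "\<exists>\<pi>. bd_stationary b d \<pi>" by blast
qed

lemma qd: "queue_death s 0 = 0" "s \<ge> 1 \<Longrightarrow> \<forall>k. queue_death s (Suc k) > 0"
  by (auto simp: queue_death_def)

lemma queue_neg:
  assumes "s \<ge> 1" "\<rho> < 0" shows "\<not> stationary_exists s \<rho> p"
proof
  assume "stationary_exists s \<rho> p"
  then have "\<forall>k. 0 \<le> (\<Prod>i<k. queue_birth s \<rho> p i / queue_death s (Suc i))"
    unfolding stationary_exists_def bd_iff[OF qd(1) qd(2)[OF assms(1)]] by blast
  from this[rule_format, of 1] have "0 \<le> queue_birth s \<rho> p 0 / queue_death s 1" by simp
  moreover have "queue_birth s \<rho> p 0 = real s * \<rho>" using assms by (simp add: queue_birth_def)
  moreover have "queue_death s 1 = 1" using assms by (simp add: queue_death_def)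
  moreover have "real s * \<rho> < 0" using assms by (simp add: mult_pos_neg)
  ultimately show False by simp
qed

lemma queue_zero:
  assumes "s \<ge> 1" shows "stationary_exists s 0 p"
proof -
  define \<pi> :: "nat \<Rightarrow> real" where "\<pi> k = (if k = 0 then 1 else 0)" for k
  have "bd_stationary (queue_birth s 0 p) (queue_death s) \<pi>"
    unfolding bd_stationary_def
  proof (intro conjI allI)
    show "0 \<le> \<pi> k" for k by (simp add: \<pi>_def)
    show "\<pi> sums 1" using sums_single[of 0 "\<lambda>_. 1::real"] unfolding \<pi>_def[abs_def] by simp
    show "(if k = 0 then 0 else \<pi> (k - 1) * queue_birth s 0 p (k - 1)) +
          \<pi> (k + 1) * queue_death s (k + 1) = \<pi> k * (queue_birth s 0 p k + queue_death s k)" for k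
      by (simp add: \<pi>_def queue_birth_def queue_death_def)
  qed
  then show ?thesis unfolding stationary_exists_def by blast
qed

lemma queue_pos:
  assumes s: "s \<ge> 1" and r: "\<rho> > 0" and p: "\<forall>k. 0 \<le> p k"
  shows "stationary_exists s \<rho> p \<longleftrightarrow> summable (\<lambda>n. \<rho> ^ n * (\<Prod>j<n. p j))"
proof -
  define w where "w k = (\<Prod>i<k. queue_birth s \<rho> p i / queue_death s (Suc i))" for k
  have wS: "w (Suc k) = w k * (queue_birth s \<rho> p k / queue_death s (Suc k))" for k
    by (simp add: w_def lessThan_Suc)
  have bnn: "0 \<le> queue_birth s \<rho> p k" for k
    using r p by (simp add: queue_birth_def)
  have wnn: "0 \<le> w k" for k
    unfolding w_def using bnn by (intro prod_nonneg) (simp add: queue_death_def)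
  have ws: "w s > 0" unfolding w_def using s r
    by (intro prod_pos) (auto simp: queue_birth_def queue_death_def)
  have wshift: "w (n + s) = w s * (\<rho> ^ n * (\<Prod>j<n. p j))" for n
  proof (induction n)
    case (Suc n)
    have "queue_birth s \<rho> p (n + s) = real s * \<rho> * p n" by (simp add: queue_birth_def)
    moreover have "queue_death s (Suc (n + s)) = real s" by (simp add: queue_death_def)
    ultimately have "w (Suc n + s) = w (n + s) * (\<rho> * p n)" using wS[of "n + s"] s by simp
    then show ?case using Suc by (simp add: lessThan_Suc)
  qed simp
  have "stationary_exists s \<rho> p \<longleftrightarrow> summable w"
    unfolding stationary_exists_def bd_iff[OF qd(1) qd(2)[OF s]] using wnn unfolding w_def[abs_def] by simp
  also have "\<dots> \<longleftrightarrow> summable (\<lambda>n. w (n + s))" by simp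
  also have "\<dots> \<longleftrightarrow> summable (\<lambda>n. \<rho> ^ n * (\<Prod>j<n. p j))" unfolding wshift using ws by simp
  finally show ?thesis .
qed



lemma not_summable_ge1: fixes f :: "nat \<Rightarrow> real" assumes "\<And>n. 1 \<le> f n" shows "\<not> summable f"
proof
  assume "summable f"
  then have "f \<longlonglongrightarrow> 0" by (rule summable_LIMSEQ_zero)
  then have "1 \<le> (0::real)" by (rule LIMSEQ_le_const) (use assms in auto)
  then show False by simp
qed

context aset begin

lemma global_series:
  assumes r: "r > 0" and rho: "\<rho> > 0"
  shows "summable (\<lambda>n. \<rho> ^ n * ctrl_f a (real n / r)) \<longleftrightarrow> ereal (r * ln \<rho>) < aI"
proof -
  define u where "u = r * ln \<rho>"
  have tm: "\<rho> ^ n * ctrl_f a (real n / r) = exp (u * (real n / r) + - A (real n / r))" for n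
  proof -
    have "\<rho> ^ n = exp (real n * ln \<rho>)" using rho by (simp add: exp_of_nat_mult)
    also have "real n * ln \<rho> = u * (real n / r)" using r by (simp add: u_def)
    finally show ?thesis by (simp add: f_eq mult_exp_exp)
  qed
  show ?thesis unfolding u_def[symmetric]
  proof
    assume "ereal u < aI"
    then obtain x0 where x0: "x0 \<ge> 0" "u < a x0" using aI_less by blast
    define c where "c = a x0"
    define q where "q = exp ((u - c) / r)"
    have q: "norm q < 1" using x0 r by (simp add: q_def c_def divide_neg_pos)
    have bnd: "norm (\<rho> ^ n * ctrl_f a (real n / r)) \<le> exp (c * x0) * q ^ n" for n
    proof -
      have "c * (real n / r - x0) \<le> A (real n / r)"
        using A_lower[OF x0(1), of "real n / r"] r by (simp add: c_def)
      moreover have "real n * ((u - c) / r) = u * (real n / r) - c * (real n / r)"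
        using r by (simp add: field_simps)
      ultimately have "u * (real n / r) + - A (real n / r) \<le> c * x0 + real n * ((u - c) / r)"
        by (simp only: right_diff_distrib)
      then have "exp (u * (real n / r) + - A (real n / r)) \<le> exp (c * x0 + real n * ((u - c) / r))"
        by simp
      also have "\<dots> = exp (c * x0) * q ^ n" by (simp only: q_def exp_add exp_of_nat_mult)
      finally show ?thesis unfolding tm by simp
    qed
    show "summable (\<lambda>n. \<rho> ^ n * ctrl_f a (real n / r))"
      by (rule summable_comparison_test'[OF summable_mult[OF summable_geometric[OF q]] bnd])
  next
    assume sm: "summable (\<lambda>n. \<rho> ^ n * ctrl_f a (real n / r))"
    show "ereal u < aI"
    proof (rule ccontr)
      assume "\<not> ereal u < aI"
      then have le: "\<forall>x\<ge>0. a x \<le> u" using aI_le by (simp add: not_less)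
      have "1 \<le> \<rho> ^ n * ctrl_f a (real n / r)" for n
      proof -
        have "A (real n / r) \<le> u * (real n / r)" using A_upper[OF le, of "real n / r"] r by simp
        then show ?thesis unfolding tm by simp
      qed
      then have "\<not> summable (\<lambda>n. \<rho> ^ n * ctrl_f a (real n / r))" by (rule not_summable_ge1)
      then show False using sm by blast
    qed
  qed
qed

lemma local_series:
  assumes r: "r > 0" and rho: "\<rho> > 0"
  shows "summable (\<lambda>n. \<rho> ^ n * (\<Prod>j<n. 1 / (1 + a (real (j + 1) / r) / r)))
     \<longleftrightarrow> ereal (r * (\<rho> - 1)) < aI"
proof -
  define q where "q j = 1 / (1 + a (real (j + 1) / r) / r)" for j
  define T where "T n = \<rho> ^ n * (\<Prod>j<n. q j)" for n
  have apos: "0 \<le> a (real (j + 1) / r)" for j using a_nonneg r by simp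
  have qpos: "q j > 0" for j using apos[of j] r by (simp add: q_def add_pos_nonneg)
  have TS: "T (Suc n) = T n * (\<rho> * q n)" for n by (simp add: T_def lessThan_Suc)
  have Tnn: "T n \<ge> 0" for n using rho qpos by (simp add: T_def less_imp_le prod_nonneg)
  have eq: "(\<lambda>n. \<rho> ^ n * (\<Prod>j<n. 1 / (1 + a (real (j + 1) / r) / r))) = T"
    by (rule ext) (simp add: T_def q_def)
  show ?thesis unfolding eq
  proof
    assume "ereal (r * (\<rho> - 1)) < aI"
    then obtain x0 where x0: "x0 \<ge> 0" "r * (\<rho> - 1) < a x0" using aI_less by blast
    define c where "c = a x0"
    have c0: "c \<ge> 0" using a_nonneg x0 by (simp add: c_def)
    define \<theta> where "\<theta> = \<rho> / (1 + c / r)"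
    have den: "1 + c / r > 0" using c0 r by (simp add: add_pos_nonneg)
    have th: "\<theta> < 1" using x0 r den unfolding \<theta>_def c_def by (simp add: field_simps)
    define N where "N = nat \<lceil>x0 * r\<rceil>"
    show "summable T"
    proof (rule summable_ratio_test[OF th])
      fix n assume "N \<le> n"
      then have "x0 * r \<le> real n" unfolding N_def by linarith
      then have "x0 \<le> real (n + 1) / r" using r by (simp add: field_simps)
      then have "c \<le> a (real (n + 1) / r)" using a_mono x0 unfolding c_def
        by (auto simp: mono_on_def)
      then have "1 + c / r \<le> 1 + a (real (n + 1) / r) / r" using r by (simp add: divide_right_mono)
      then have "\<rho> * q n \<le> \<theta>" unfolding q_def \<theta>_def using den rho
        by (simp add: frac_le)
      then have "T n * (\<rho> * q n) \<le> T n * \<theta>" using Tnn[of n] by (rule mult_left_mono)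
      then show "norm (T (Suc n)) \<le> \<theta> * norm (T n)" unfolding TS using Tnn[of n] qpos[of n] rho
        by (simp add: mult.commute)
    qed
  next
    assume sm: "summable T"
    show "ereal (r * (\<rho> - 1)) < aI"
    proof (rule ccontr)
      assume "\<not> ereal (r * (\<rho> - 1)) < aI"
      then have le: "\<forall>x\<ge>0. a x \<le> r * (\<rho> - 1)" using aI_le by (simp add: not_less)
      have step: "1 \<le> \<rho> * q j" for j
      proof -
        have "a (real (j + 1) / r) \<le> r * (\<rho> - 1)" using le r by simp
        then have "1 + a (real (j + 1) / r) / r \<le> \<rho>" using r by (simp add: field_simps)
        then show ?thesis using qpos[of j] apos[of j] r unfolding q_def
          by (simp add: field_simps add_pos_nonneg)
      qed
      have "1 \<le> T n" for n
      proof (induction n)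
        case 0 then show ?case by (simp add: T_def)
      next
        case (Suc n)
        then show ?case unfolding TS using step[of n] by (metis mult_mono' mult_1 zero_le_one)
      qed
      then have "\<not> summable T" by (rule not_summable_ge1)
      then show False using sm by blast
    qed
  qed
qed

end


lemma bigO_part:
  fixes g :: real assumes g: "g \<le> 0"
  shows "(\<lambda>s::nat. exp (- g / sqrt (real s)) - (1 - g / sqrt (real s))) \<in> O(\<lambda>s. 1 / real s)"
proof (rule bigoI[where c = "g^2"])
  have "\<forall>s\<ge>nat \<lceil>g^2\<rceil> + 1. norm (exp (- g / sqrt (real s)) - (1 - g / sqrt (real s)))
          \<le> g^2 * norm (1 / real s)"
  proof (intro allI impI)
    fix s :: nat assume sN: "s \<ge> nat \<lceil>g^2\<rceil> + 1"
    then have s0: "real s > 0" by simp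
    have sg: "g^2 \<le> real s" using sN by linarith
    define x where "x = - g / sqrt (real s)"
    have x0: "0 \<le> x" using g s0 by (simp add: x_def divide_nonpos_nonneg)
    have x2: "x^2 = g^2 / real s" using s0 by (simp add: x_def power_divide)
    have x1: "x \<le> 1"
    proof -
      have "x^2 \<le> 1" using x2 sg s0 by (simp add: divide_le_eq_1)
      then show ?thesis using x0 by (simp add: power_le_one_iff abs_square_le_1)
    qed
    have "exp x \<le> 1 + x + x^2" using exp_bound[OF x0 x1] .
    moreover have "1 + x \<le> exp x" by simp
    ultimately have "norm (exp x - (1 + x)) \<le> x^2" by simp
    then show "norm (exp (- g / sqrt (real s)) - (1 - g / sqrt (real s))) \<le> g^2 * norm (1 / real s)"
      unfolding x2 using s0 by (simp add: x_def diff_minus_eq_add)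
  qed
  then show "\<forall>\<^sub>F x in sequentially. norm (exp (- g / sqrt (real x)) - (1 - g / sqrt (real x)))
          \<le> g^2 * norm (1 / real x)"
    unfolding eventually_sequentially by blast
qed

theorem proposition3p1:
  fixes a :: "real \<Rightarrow> real"
  assumes a_nonneg: "\<forall>x\<ge>0. 0 \<le> a x"
    and a_mono: "mono_on {0..} a"
  shows "(\<forall>s::nat. s \<ge> 1 \<longrightarrow> (\<forall>\<rho>::real.
            (\<forall>p. (\<forall>n. (\<Prod>i\<in>{0..n}. p i) = ctrl_f a (real (n + 1) / sqrt (real s))) \<longrightarrow>
               (stationary_exists s \<rho> p \<longleftrightarrow>
                  0 \<le> \<rho> \<and> (gamma_min a = -\<infinity> \<or>
                     \<rho> < exp (- real_of_ereal (gamma_min a) / sqrt (real s)))))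
          \<and> (stationary_exists s \<rho>
                (\<lambda>k. 1 / (1 + a (real (k + 1) / sqrt (real s)) / sqrt (real s)))
               \<longleftrightarrow> 0 \<le> \<rho> \<and> ereal \<rho> < 1 - gamma_min a / ereal (sqrt (real s)))))
       \<and> (gamma_min a \<noteq> -\<infinity> \<longrightarrow>
            (\<lambda>s::nat. exp (- real_of_ereal (gamma_min a) / sqrt (real s))
                      - (1 - real_of_ereal (gamma_min a) / sqrt (real s)))
            \<in> O(\<lambda>s. 1 / real s))"
proof -
  interpret aset a using assms by unfold_locales
  have gm: "gamma_min a = - aI" by (rule gamma_min_eq)
  have aI0: "0 \<le> aI" by (rule aI_nonneg)
  have part1: "\<forall>s::nat. s \<ge> 1 \<longrightarrow> (\<forall>\<rho>::real.
            (\<forall>p. (\<forall>n. (\<Prod>i\<in>{0..n}. p i) = ctrl_f a (real (n + 1) / sqrt (real s))) \<longrightarrow>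
               (stationary_exists s \<rho> p \<longleftrightarrow>
                  0 \<le> \<rho> \<and> (gamma_min a = -\<infinity> \<or>
                     \<rho> < exp (- real_of_ereal (gamma_min a) / sqrt (real s)))))
          \<and> (stationary_exists s \<rho>
                (\<lambda>k. 1 / (1 + a (real (k + 1) / sqrt (real s)) / sqrt (real s)))
               \<longleftrightarrow> 0 \<le> \<rho> \<and> ereal \<rho> < 1 - gamma_min a / ereal (sqrt (real s))))"
  proof (intro allI impI, rule conjI)
    fix s :: nat and \<rho> :: real assume s: "s \<ge> 1"
    define r where "r = sqrt (real s)"
    have r0: "r > 0" using s by (simp add: r_def)
    show "\<forall>p. (\<forall>n. (\<Prod>i\<in>{0..n}. p i) = ctrl_f a (real (n + 1) / sqrt (real s))) \<longrightarrow>
               (stationary_exists s \<rho> p \<longleftrightarrow>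
                  0 \<le> \<rho> \<and> (gamma_min a = -\<infinity> \<or>
                     \<rho> < exp (- real_of_ereal (gamma_min a) / sqrt (real s))))"
    proof (intro allI impI)
      fix p assume hp: "\<forall>n. (\<Prod>i\<in>{0..n}. p i) = ctrl_f a (real (n + 1) / sqrt (real s))"
      have prodp: "(\<Prod>j<n. p j) = ctrl_f a (real n / r)" for n
      proof (cases n)
        case 0 then show ?thesis by (simp add: ctrl_f_def)
      next
        case (Suc m)
        then show ?thesis using hp[rule_format, of m]
          by (simp add: r_def atLeast0AtMost lessThan_Suc_atMost)
      qed
      have fpos: "ctrl_f a x > 0" for x by (simp add: ctrl_f_def)
      have pnn: "0 \<le> p k" for k
      proof -
        have "(\<Prod>j<k. p j) * p k = ctrl_f a (real (Suc k) / r)"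
          using prodp[of "Suc k"] by (simp add: lessThan_Suc mult.commute)
        then have "0 < (\<Prod>j<k. p j) * p k" using fpos by simp
        moreover have "0 < (\<Prod>j<k. p j)" using prodp[of k] fpos by simp
        ultimately show ?thesis by (simp add: zero_less_mult_iff)
      qed
      show "stationary_exists s \<rho> p \<longleftrightarrow> 0 \<le> \<rho> \<and> (gamma_min a = -\<infinity> \<or>
                     \<rho> < exp (- real_of_ereal (gamma_min a) / sqrt (real s)))"
      proof (cases "\<rho> > 0")
        case False
        show ?thesis
        proof (cases "\<rho> = 0")
          case True then show ?thesis using queue_zero[OF s] by simp
        next
          case False then have "\<rho> < 0" using \<open>\<not> \<rho> > 0\<close> by simp
          then show ?thesis using queue_neg[OF s] by simp
        qed
      next
        case True
        have "stationary_exists s \<rho> p \<longleftrightarrow> ereal (r * ln \<rho>) < aI"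
          using queue_pos[OF s True] pnn global_series[OF r0 True] by (simp add: prodp)
        also have "\<dots> \<longleftrightarrow> 0 \<le> \<rho> \<and> (gamma_min a = -\<infinity> \<or>
                     \<rho> < exp (- real_of_ereal (gamma_min a) / r))"
        proof (cases aI)
          case (real \<alpha>)
          have "\<rho> < exp (\<alpha> / r) \<longleftrightarrow> ln \<rho> < \<alpha> / r"
            using True by (metis exp_less_cancel_iff exp_ln)
          also have "\<dots> \<longleftrightarrow> r * ln \<rho> < \<alpha>" using r0 by (simp add: pos_less_divide_eq mult.commute)
          finally show ?thesis using True real by (simp add: gm)
        next
          case PInf then show ?thesis using True by (simp add: gm)
        next
          case MInf then show ?thesis using aI0 by simp
        qed
        finally show ?thesis by (simp add: r_def)
      qed
    qed
    show "stationary_exists s \<rho> (\<lambda>k. 1 / (1 + a (real (k + 1) / sqrt (real s)) / sqrt (real s)))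
               \<longleftrightarrow> 0 \<le> \<rho> \<and> ereal \<rho> < 1 - gamma_min a / ereal (sqrt (real s))"
    proof (cases "\<rho> > 0")
      case False
      show ?thesis
      proof (cases "\<rho> = 0")
        case True
        have "ereal 0 < 1 - gamma_min a / ereal (sqrt (real s))"
        proof (cases aI)
          case (real \<alpha>)
          then have "\<alpha> \<ge> 0" using aI0 by simp
          then have "0 < 1 + \<alpha> / sqrt (real s)" using s by (simp add: add_pos_nonneg)
          then show ?thesis using real s by (simp add: gm one_ereal_def)
        next
          case PInf then show ?thesis using s by (simp add: gm)
        next
          case MInf then show ?thesis using aI0 by simp
        qed
        then show ?thesis using True queue_zero[OF s] by simp
      next
        case False then have "\<rho> < 0" using \<open>\<not> \<rho> > 0\<close> by simp
        then show ?thesis using queue_neg[OF s] by simp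
      qed
    next
      case True
      have pnn: "0 \<le> 1 / (1 + a (real (k + 1) / sqrt (real s)) / sqrt (real s))" for k
        using a_nonneg by (simp add: add_nonneg_nonneg)
      have "stationary_exists s \<rho> (\<lambda>k. 1 / (1 + a (real (k + 1) / sqrt (real s)) / sqrt (real s)))
          \<longleftrightarrow> ereal (r * (\<rho> - 1)) < aI"
        using queue_pos[OF s True] pnn local_series[OF r0 True] by (simp add: r_def)
      also have "\<dots> \<longleftrightarrow> 0 \<le> \<rho> \<and> ereal \<rho> < 1 - gamma_min a / ereal r"
      proof (cases aI)
        case (real \<alpha>)
        have "r * (\<rho> - 1) < \<alpha> \<longleftrightarrow> \<rho> < 1 + \<alpha> / r" using r0
          by (simp add: field_simps)
        then show ?thesis using True real r0 by (simp add: gm one_ereal_def)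
      next
        case PInf then show ?thesis using True r0 by (simp add: gm)
      next
        case MInf then show ?thesis using aI0 by simp
      qed
      finally show ?thesis by (simp add: r_def)
    qed
  qed
  have part2: "gamma_min a \<noteq> -\<infinity> \<longrightarrow>
            (\<lambda>s::nat. exp (- real_of_ereal (gamma_min a) / sqrt (real s))
                      - (1 - real_of_ereal (gamma_min a) / sqrt (real s)))
            \<in> O(\<lambda>s. 1 / real s)"
  proof
    assume "gamma_min a \<noteq> -\<infinity>"
    have "real_of_ereal (gamma_min a) \<le> 0" using aI0 unfolding gm
      by (cases aI) auto
    then show "(\<lambda>s::nat. exp (- real_of_ereal (gamma_min a) / sqrt (real s))
                      - (1 - real_of_ereal (gamma_min a) / sqrt (real s)))
            \<in> O(\<lambda>s. 1 / real s)" by (rule bigO_part)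
  qed
  show ?thesis using part1 part2 by blast
qed

end
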